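(* Let $n=5$, let $x_1<x_2<\cdots<x_5$ be fixed real numbers and $Y_i=\beta_0+\beta_1x_i+\varepsilon_i$ ($i=1,\dots,5$) with $\varepsilon_1,\dots,\varepsilon_5$ i.i.d. with a continuous distribution. Let $s_1<s_2<\cdots<s_{10}$ be the ten slopes $S_{ij}=(Y_i-Y_j)/(x_i-x_j)$, $i<j$, sorted increasingly, and let $w_1<w_2<\cdots<w_{55}$ be the $55$ Walsh averages $(s_i+s_j)/2$, $1\le i\le j\le 10$, sorted increasingly. Then: (a) $s_2\le w_9$ if and only if $2s_2\le s_1+s_9$; (b) $w_{47}\le s_9$ if and only if $s_2+s_{10}\le 2s_9$.
   Context: Ties among the slopes and among the Walsh averages occur with probability zero and are ignored, i.e. all slopes are assumed pairwise distinct and all Walsh averages pairwise distinct. *)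

theory Defs
  imports Complex_Main
begin

definition slopes :: "(nat \<Rightarrow> real) \<Rightarrow> (nat \<Rightarrow> real) \<Rightarrow> real list" where
  "slopes x Y = [(Y i - Y j) / (x i - x j). i \<leftarrow> [1..<6], j \<leftarrow> [Suc i..<6]]"

definition sl :: "(nat \<Rightarrow> real) \<Rightarrow> (nat \<Rightarrow> real) \<Rightarrow> nat \<Rightarrow> real" where
  "sl x Y k = sort (slopes x Y) ! (k - 1)"

definition walsh :: "(nat \<Rightarrow> real) \<Rightarrow> (nat \<Rightarrow> real) \<Rightarrow> real list" where
  "walsh x Y = [(sl x Y i + sl x Y j) / 2. i \<leftarrow> [1..<11], j \<leftarrow> [i..<11]]"

definition wa :: "(nat \<Rightarrow> real) \<Rightarrow> (nat \<Rightarrow> real) \<Rightarrow> nat \<Rightarrow> real" where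
  "wa x Y k = sort (walsh x Y) ! (k - 1)"

end

theory Submission
  imports Defs
begin

lemma idx_filter:
  fixes ys :: "real list"
  assumes "sorted_wrt (<) ys" "m < length ys"
  shows "length (filter (\<lambda>u. u < ys!m) ys) = m"
proof -
  have "length (filter (\<lambda>u. u < ys!m) ys) = card {i. i < length ys \<and> ys!i < ys!m}"
    by (simp add: length_filter_conv_card)
  also have "{i. i < length ys \<and> ys!i < ys!m} = {..<m}"
  proof safe
    fix i assume "i < length ys" "ys!i < ys!m"
    then show "i < m" using assms
      by (metis linorder_neqE_nat not_less_iff_gr_or_eq sorted_wrt_nth_less)
  next
    fix i assume "i < m" then show "i < length ys" using assms by simp
    show "ys!i < ys!m" using assms \<open>i<m\<close> by (simp add: sorted_wrt_nth_less)
  qed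
  finally show ?thesis by simp
qed

lemma pos_le:
  fixes ys :: "real list"
  assumes "sorted_wrt (<) ys" "v \<in> set ys" "k < length ys"
  shows "(v \<le> ys!k \<longleftrightarrow> length (filter (\<lambda>u. u < v) ys) \<le> k)
       \<and> (ys!k \<le> v \<longleftrightarrow> k \<le> length (filter (\<lambda>u. u < v) ys))"
proof -
  obtain m where m: "m < length ys" "v = ys!m" using assms(2) by (auto simp: in_set_conv_nth)
  have c: "length (filter (\<lambda>u. u < v) ys) = m" using idx_filter[OF assms(1) m(1)] m by simp
  have mono: "\<And>a b. a < length ys \<Longrightarrow> b < length ys \<Longrightarrow> ys!a \<le> ys!b \<longleftrightarrow> a \<le> b"
    using assms(1)
    by (metis antisym_conv1 linorder_not_le nless_le sorted_wrt_nth_less)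
  show ?thesis using mono[OF m(1) assms(3)] mono[OF assms(3) m(1)] c m by simp
qed

lemma count_sort: "length (filter P (sort xs)) = length (filter P xs)"
  by (metis filter_sort length_sort)

lemma test:
  fixes a1 a2 a3 a4 a5 a6 a7 a8 a9 a10 :: real
  assumes "s = [a1,a2,a3,a4,a5,a6,a7,a8,a9,a10]" "a1 < a2" "a2 < a3" "a3 < a4" "a4 < a5" "a5 < a6" "a6 < a7" "a7 < a8" "a8 < a9" "a9 < a10"
  shows "length (filter (\<lambda>u. u < a2) [(s!i + s!j)/2. i \<leftarrow> [0..<10], j \<leftarrow> [i..<10]]) \<le> 8
     \<longleftrightarrow> 2 * a2 \<le> a1 + a9"
  using assms by (simp add: upt_rec field_simps)

lemma testb:
  fixes a1 a2 a3 a4 a5 a6 a7 a8 a9 a10 :: real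
  assumes "s = [a1,a2,a3,a4,a5,a6,a7,a8,a9,a10]" "a1 < a2" "a2 < a3" "a3 < a4" "a4 < a5" "a5 < a6" "a6 < a7" "a7 < a8" "a8 < a9" "a9 < a10" "a2 + a10 \<noteq> 2 * a9"
  shows "46 \<le> length (filter (\<lambda>u. u < a9) [(s!i + s!j)/2. i \<leftarrow> [0..<10], j \<leftarrow> [i..<10]])
     \<longleftrightarrow> a2 + a10 \<le> 2 * a9"
proof -
  define c where "c = 2 * a9 - a10"
  have "c \<le> a1 \<or> (a1 < c \<and> c \<le> a2) \<or> (a2 < c \<and> c \<le> a3) \<or> (a3 < c \<and> c \<le> a4)
    \<or> (a4 < c \<and> c \<le> a5) \<or> (a5 < c \<and> c \<le> a6) \<or> (a6 < c \<and> c \<le> a7) \<or> (a7 < c \<and> c \<le> a8)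
    \<or> a8 < c" by linarith
  then show ?thesis using assms unfolding c_def
    by (elim disjE) (simp_all add: upt_rec field_simps)
qed

theorem theorem3:
  fixes x Y \<epsilon> :: "nat \<Rightarrow> real" and \<beta>0 \<beta>1 :: real
  assumes x_incr: "\<And>i j. 1 \<le> i \<Longrightarrow> i < j \<Longrightarrow> j \<le> 5 \<Longrightarrow> x i < x j"
    and model: "\<And>i. 1 \<le> i \<Longrightarrow> i \<le> 5 \<Longrightarrow> Y i = \<beta>0 + \<beta>1 * x i + \<epsilon> i"
    and slopes_distinct: "distinct (slopes x Y)"
    and walsh_distinct: "distinct (walsh x Y)"
  shows "(sl x Y 2 \<le> wa x Y 9 \<longleftrightarrow> 2 * sl x Y 2 \<le> sl x Y 1 + sl x Y 9)
       \<and> (wa x Y 47 \<le> sl x Y 9 \<longleftrightarrow> sl x Y 2 + sl x Y 10 \<le> 2 * sl x Y 9)"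
proof -
  define s where "s = sort (slopes x Y)"
  have ls: "length s = 10" by (simp add: s_def slopes_def upt_rec)
  have ss: "sorted_wrt (<) s" using slopes_distinct
    by (simp add: s_def strict_sorted_iff)
  have se: "s = [s!0,s!1,s!2,s!3,s!4,s!5,s!6,s!7,s!8,s!9]"
    by (rule nth_equalityI) (use ls in \<open>auto simp: less_Suc_eq numeral_eq_Suc\<close>)
  have o: "s!0 < s!1" "s!1 < s!2" "s!2 < s!3" "s!3 < s!4" "s!4 < s!5" "s!5 < s!6"
     "s!6 < s!7" "s!7 < s!8" "s!8 < s!9"
    using ss ls by (simp_all add: sorted_wrt_nth_less)
  have slk: "\<And>k. sl x Y k = s!(k-1)" by (simp add: sl_def s_def)
  have we: "walsh x Y = [(s!i + s!j)/2. i \<leftarrow> [0..<10], j \<leftarrow> [i..<10]]"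
    by (simp add: walsh_def slk upt_rec)
  define W where "W = sort (walsh x Y)"
  have sW: "sorted_wrt (<) W" using walsh_distinct by (simp add: W_def strict_sorted_iff)
  have lW: "length W = 55" by (simp add: W_def we upt_rec)
  have wak: "\<And>k. wa x Y k = W!(k-1)" by (simp add: wa_def W_def)
  have cW: "\<And>P. length (filter P W) = length (filter P [(s!i + s!j)/2. i \<leftarrow> [0..<10], j \<leftarrow> [i..<10]])"
    by (simp add: W_def count_sort we)
  have lw: "length (walsh x Y) = 55" by (simp add: we upt_rec)
  have w52: "walsh x Y ! 52 = (s!8 + s!8)/2" by (simp add: we upt_rec numeral_eq_Suc)
  have w18: "walsh x Y ! 18 = (s!1 + s!9)/2" by (simp add: we upt_rec numeral_eq_Suc)
  have w10: "walsh x Y ! 10 = (s!1 + s!1)/2" by (simp add: we upt_rec numeral_eq_Suc)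
  have m1: "s!1 \<in> set W" using nth_mem[of 10 "walsh x Y"] lw w10 by (simp add: W_def)
  have m8: "s!8 \<in> set W" using nth_mem[of 52 "walsh x Y"] lw w52 by (simp add: W_def)
  have A: "s!1 \<le> W!8 \<longleftrightarrow> 2 * s!1 \<le> s!0 + s!8"
    using pos_le[OF sW m1, of 8] lW cW test[OF se o] by simp
  have "walsh x Y ! 52 \<noteq> walsh x Y ! 18"
    using walsh_distinct lw by (simp add: nth_eq_iff_index_eq del: w52 w18)
  hence nd: "s!1 + s!9 \<noteq> 2 * s!8" using w52 w18 by auto
  have B: "W!46 \<le> s!8 \<longleftrightarrow> s!1 + s!9 \<le> 2 * s!8"
    using pos_le[OF sW m8, of 46] lW cW testb[OF se o nd] by simp
  show ?thesis using A B by (simp add: slk wak)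
qed

end
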